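(* Let $N\in\mathbb{N}$, $J\in\{0,\dots,N\}$, $m,M\in(0,1)$ with $m\le M$, and $a_1,\dots,a_N\in[m,M]$. Define $f\colon[m,M]^N\to\mathbb{R}^+$ by \[ f(z_1,\dots,z_N)=\prod_{i=1}^{J}\Big(N+\frac{a_i}{z_i}\Big)\prod_{i=J+1}^{N}\Big(N+\frac{1-a_i}{1-z_i}\Big). \] Then $f$ is convex. Moreover, any function obtained from $f$ by recursively substituting variables $z_i$ by affine functions of the remaining free variables (on a convex domain mapped into $[m,M]^N$) is convex. *)

theory Defs
  imports "HOL-Analysis.Analysis"
begin

text \<open>Vectors in R^N are represented as functions nat => real, only the
components 1..N being relevant.  The function f of the lemma:\<close>

definition lem2_f :: "nat \<Rightarrow> nat \<Rightarrow> (nat \<Rightarrow> real) \<Rightarrow> (nat \<Rightarrow> real) \<Rightarrow> real" where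
  "lem2_f N J a z =
     (\<Prod>i=1..J. real N + a i / z i) * (\<Prod>i=J+1..N. real N + (1 - a i) / (1 - z i))"

definition lem2_box :: "nat \<Rightarrow> real \<Rightarrow> real \<Rightarrow> (nat \<Rightarrow> real) set" where
  "lem2_box N m M = {z. \<forall>i\<in>{1..N}. m \<le> z i \<and> z i \<le> M}"

end

theory Submission
  imports Defs
begin

lemma phi_convex:
  fixes K b :: real
  assumes "0 \<le> K" "0 < b"
  shows "convex_on {0<..} (\<lambda>z. ln (K * z + b) - ln z)"
proof (rule f''_ge0_imp_convex[where f' = "\<lambda>z. K / (K * z + b) - 1 / z"
      and f'' = "\<lambda>z. - (K * K) / (K * z + b)^2 + 1 / z^2"])
  fix x :: real assume x: "x \<in> {0<..}"
  then have p: "K * x + b > 0" using assms by (simp add: add_nonneg_pos)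
  show "((\<lambda>z. ln (K * z + b) - ln z) has_real_derivative K / (K * x + b) - 1 / x) (at x)"
    using x p by (auto intro!: derivative_eq_intros)
  show "((\<lambda>z. K / (K * z + b) - 1 / z) has_real_derivative - (K * K) / (K * x + b)^2 + 1 / x^2) (at x)"
    using x p by (auto intro!: derivative_eq_intros simp: power2_eq_square field_simps)
  have "K * x \<le> K * x + b" using assms by simp
  then have "(K * x)^2 \<le> (K * x + b)^2" using assms x by (intro power_mono) auto
  then have "(K*K) * x^2 \<le> (K * x + b)^2" by (simp add: power2_eq_square algebra_simps)
  then have "(K*K) / (K * x + b)^2 \<le> 1 / x^2" using x p
    by (simp add: divide_simps)
  then show "0 \<le> - (K * K) / (K * x + b)^2 + 1 / x^2" by simp
qed (auto)

lemma conv_aff: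
  fixes D :: "'v::real_vector set"
  assumes "convex_on S \<phi>" "linear L" "\<forall>x\<in>D. c + L x \<in> S" "convex D"
  shows "convex_on D (\<lambda>x. \<phi> (c + L x))"
proof (rule convex_onI[OF _ assms(4)])
  fix t :: real and x y assume t: "0 < t" "t < 1" and xy: "x \<in> D" "y \<in> D"
  have "c + L ((1 - t) *\<^sub>R x + t *\<^sub>R y) = (1 - t) *\<^sub>R (c + L x) + t *\<^sub>R (c + L y)"
    using assms(2) by (simp add: linear_add linear_scale)
  then show "\<phi> (c + L ((1 - t) *\<^sub>R x + t *\<^sub>R y)) \<le> (1 - t) * \<phi> (c + L x) + t * \<phi> (c + L y)"
    using convex_onD[OF assms(1), of t "c + L x" "c + L y"] t xy assms(3) by simp
qed

lemma conv_sum: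
  fixes D :: "'v::real_vector set"
  assumes "finite I" "convex D" "\<And>i. i \<in> I \<Longrightarrow> convex_on D (g i)"
  shows "convex_on D (\<lambda>x. \<Sum>i\<in>I. g i x)"
  using assms
proof (induction I rule: finite_induct)
  case empty then show ?case by (simp add: convex_on_const)
next
  case (insert j F)
  then show ?case by (simp add: convex_on_add)
qed

lemma conv_exp:
  fixes D :: "'v::real_vector set"
  assumes "convex_on D h"
  shows "convex_on D (\<lambda>x. exp (h x))"
proof (rule convex_onI)
  show "convex D" using assms by (simp add: convex_on_def)
  fix t :: real and x y assume t: "0 < t" "t < 1" and xy: "x \<in> D" "y \<in> D"
  have "exp (h ((1 - t) *\<^sub>R x + t *\<^sub>R y)) \<le> exp ((1 - t) * h x + t * h y)"
    using convex_onD[OF assms, of t x y] t xy by simp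
  also have "\<dots> = exp ((1 - t) *\<^sub>R h x + t *\<^sub>R h y)" by simp
  also have "\<dots> \<le> (1 - t) * exp (h x) + t * exp (h y)"
    using convex_onD[OF exp_convex, of t "h x" "h y"] t by simp
  finally show "exp (h ((1 - t) *\<^sub>R x + t *\<^sub>R y)) \<le> (1 - t) * exp (h x) + t * exp (h y)" .
qed

lemma conv_cong:
  assumes "convex_on D g" "\<And>x. x \<in> D \<Longrightarrow> f x = g x"
  shows "convex_on D f"
proof -
  have cD: "convex D" using assms(1) by (simp add: convex_on_def)
  show ?thesis
  proof (rule convex_onI[OF _ cD])
    fix t :: real and x y assume t: "0 < t" "t < 1" and xy: "x \<in> D" "y \<in> D"
    have "(1 - t) *\<^sub>R x + t *\<^sub>R y \<in> D" using cD xy t by (simp add: convex_def)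
    then show "f ((1 - t) *\<^sub>R x + t *\<^sub>R y) \<le> (1 - t) * f x + t * f y"
      using convex_onD[OF assms(1), of t x y] t xy assms(2) by simp
  qed
qed

lemma lin_neg: "linear L \<Longrightarrow> linear (\<lambda>x. - L x)"
  by (rule linear_compose_neg)

lemma ln_term:
  fixes K b z :: real
  assumes "0 \<le> K" "0 < b" "0 < z"
  shows "exp (ln (K * z + b) - ln z) = K + b / z"
proof -
  have "K * z + b > 0" using assms by (simp add: add_nonneg_pos)
  then show ?thesis using assms by (simp add: exp_diff field_simps)
qed

lemma part2:
  fixes N J :: nat and m M :: real and a :: "nat \<Rightarrow> real"
    and D :: "'v::real_vector set" and c :: "nat \<Rightarrow> real" and L :: "nat \<Rightarrow> 'v \<Rightarrow> real"
  assumes "J \<le> N"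
    and "0 < m" and "M < 1"
    and a: "\<forall>i\<in>{1..N}. m \<le> a i \<and> a i \<le> M"
    and D: "convex D" and lin: "\<forall>i\<in>{1..N}. linear (L i)"
    and box: "\<forall>x\<in>D. (\<lambda>i. c i + L i x) \<in> lem2_box N m M"
  shows "convex_on D (\<lambda>x. lem2_f N J a (\<lambda>i. c i + L i x))"
proof -
  define \<phi> where "\<phi> b z = ln (real N * z + b) - ln z" for b z :: real
  have phic: "convex_on {0<..} (\<phi> b)" if "0 < b" for b
    unfolding \<phi>_def using phi_convex[of "real N" b] that by simp
  define h where "h x = (\<Sum>i=1..J. \<phi> (a i) (c i + L i x))
     + (\<Sum>i=J+1..N. \<phi> (1 - a i) ((1 - c i) + (- L i x)))" for x
  have bx: "m \<le> c i + L i x \<and> c i + L i x \<le> M" if "x \<in> D" "i \<in> {1..N}" for x i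
    using box that unfolding lem2_box_def by auto
  have "convex_on D h"
    unfolding h_def
  proof (intro convex_on_add conv_sum D)
    fix i assume i: "i \<in> {1..J}"
    then have i': "i \<in> {1..N}" using assms(1) by auto
    show "convex_on D (\<lambda>x. \<phi> (a i) (c i + L i x))"
    proof (rule conv_aff[OF phic _ _ D])
      show "0 < a i" using a i' assms(2) by fastforce
      show "linear (L i)" using lin i' by blast
      show "\<forall>x\<in>D. c i + L i x \<in> {0<..}" using bx[OF _ i'] assms(2) by fastforce
    qed
  next
    fix i assume i: "i \<in> {J+1..N}"
    then have i': "i \<in> {1..N}" by auto
    show "convex_on D (\<lambda>x. \<phi> (1 - a i) ((1 - c i) + (- L i x)))"
    proof (rule conv_aff[OF phic _ _ D])
      show "0 < 1 - a i" using a i' assms(3) by fastforce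
      show "linear (\<lambda>x. - L i x)" using lin i' lin_neg by blast
      show "\<forall>x\<in>D. 1 - c i + - L i x \<in> {0<..}" using bx[OF _ i'] assms(3) by fastforce
    qed
  qed auto
  then have "convex_on D (\<lambda>x. exp (h x))" by (rule conv_exp)
  then show ?thesis
  proof (rule conv_cong)
    fix x assume x: "x \<in> D"
    have e1: "exp (\<phi> (a i) (c i + L i x)) = real N + a i / (c i + L i x)" if i: "i \<in> {1..J}" for i
    proof -
      have i': "i \<in> {1..N}" using i assms(1) by auto
      show ?thesis unfolding \<phi>_def
        using ln_term[of "real N" "a i" "c i + L i x"] a i' bx[OF x i'] assms(2) by force
    qed
    have e2: "exp (\<phi> (1 - a i) ((1 - c i) + (- L i x))) = real N + (1 - a i) / (1 - (c i + L i x))"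
      if i: "i \<in> {J+1..N}" for i
    proof -
      have i': "i \<in> {1..N}" using i by auto
      have "exp (\<phi> (1 - a i) ((1 - c i) + (- L i x))) = real N + (1 - a i) / ((1 - c i) + (- L i x))"
        unfolding \<phi>_def
        using ln_term[of "real N" "1 - a i" "(1 - c i) + (- L i x)"] a i' bx[OF x i'] assms(3) by force
      then show ?thesis by (simp add: algebra_simps)
    qed
    show "lem2_f N J a (\<lambda>i. c i + L i x) = exp (h x)"
      unfolding h_def lem2_f_def exp_add exp_sum[OF finite_atLeastAtMost]
      using e1 e2 by simp
  qed
qed

theorem lemma2:
  fixes N J :: nat and m M :: real and a :: "nat \<Rightarrow> real"
  assumes "J \<le> N"
    and "0 < m" and "m < 1" and "0 < M" and "M < 1" and "m \<le> M"
    and "\<forall>i\<in>{1..N}. m \<le> a i \<and> a i \<le> M"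
  shows "(\<forall>x\<in>lem2_box N m M. \<forall>y\<in>lem2_box N m M. \<forall>t::real. 0 \<le> t \<and> t \<le> 1 \<longrightarrow>
            lem2_f N J a (\<lambda>i. (1 - t) * x i + t * y i)
              \<le> (1 - t) * lem2_f N J a x + t * lem2_f N J a y)
       \<and> (\<forall>(D :: 'v::real_vector set) (c :: nat \<Rightarrow> real) (L :: nat \<Rightarrow> 'v \<Rightarrow> real).
            convex D \<longrightarrow> (\<forall>i\<in>{1..N}. linear (L i)) \<longrightarrow>
            (\<forall>x\<in>D. (\<lambda>i. c i + L i x) \<in> lem2_box N m M) \<longrightarrow>
            convex_on D (\<lambda>x. lem2_f N J a (\<lambda>i. c i + L i x)))"
proof (intro conjI allI ballI impI)
  fix D :: "'v::real_vector set" and c :: "nat \<Rightarrow> real" and L :: "nat \<Rightarrow> 'v \<Rightarrow> real"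
  assume "convex D" "\<forall>i\<in>{1..N}. linear (L i)" "\<forall>x\<in>D. (\<lambda>i. c i + L i x) \<in> lem2_box N m M"
  then show "convex_on D (\<lambda>x. lem2_f N J a (\<lambda>i. c i + L i x))"
    using part2[OF assms(1,2,5,7)] by blast
next
  fix x y :: "nat \<Rightarrow> real" and t :: real assume x: "x \<in> lem2_box N m M" and y: "y \<in> lem2_box N m M" and t: "0 \<le> t \<and> t \<le> 1"
  define L where "L i s = s * (y i - x i)" for i and s :: real
  have lin: "\<forall>i\<in>{1..N}. linear (L i)"
    unfolding L_def by (auto intro: bounded_linear.linear[OF bounded_linear_mult_left])
  have bx: "\<forall>s\<in>{0..1::real}. (\<lambda>i. x i + L i s) \<in> lem2_box N m M"
  proof
    fix s :: real assume s: "s \<in> {0..1}"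
    have "m \<le> x i + s * (y i - x i) \<and> x i + s * (y i - x i) \<le> M" if "i \<in> {1..N}" for i
    proof -
      have "x i + s * (y i - x i) = (1 - s) * x i + s * y i" by (simp add: algebra_simps)
      moreover have "m \<le> x i" "x i \<le> M" "m \<le> y i" "y i \<le> M"
        using x y that unfolding lem2_box_def by auto
      moreover have "(1 - s) * m + s * m \<le> (1 - s) * x i + s * y i"
        using s \<open>m \<le> x i\<close> \<open>m \<le> y i\<close> by (intro add_mono mult_left_mono) auto
      moreover have "(1 - s) * x i + s * y i \<le> (1 - s) * M + s * M"
        using s \<open>x i \<le> M\<close> \<open>y i \<le> M\<close> by (intro add_mono mult_left_mono) auto
      ultimately show ?thesis by (simp add: algebra_simps)
    qed
    then show "(\<lambda>i. x i + L i s) \<in> lem2_box N m M" unfolding lem2_box_def L_def by auto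
  qed
  have cv: "convex_on {0..1::real} (\<lambda>s. lem2_f N J a (\<lambda>i. x i + L i s))"
    using part2[OF assms(1,2,5,7) convex_real_interval(5) lin bx] by simp
  have "lem2_f N J a (\<lambda>i. x i + L i ((1 - t) *\<^sub>R 0 + t *\<^sub>R 1))
      \<le> (1 - t) * lem2_f N J a (\<lambda>i. x i + L i 0) + t * lem2_f N J a (\<lambda>i. x i + L i 1)"
    using convex_onD[OF cv, of t 0 1] t by simp
  moreover have "(\<lambda>i. x i + L i ((1 - t) *\<^sub>R 0 + t *\<^sub>R 1)) = (\<lambda>i. (1 - t) * x i + t * y i)"
    unfolding L_def by (auto simp: algebra_simps)
  moreover have "(\<lambda>i. x i + L i 0) = x" "(\<lambda>i. x i + L i 1) = y" unfolding L_def by auto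
  ultimately show "lem2_f N J a (\<lambda>i. (1 - t) * x i + t * y i)
              \<le> (1 - t) * lem2_f N J a x + t * lem2_f N J a y" by simp
qed

end
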